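(* Let $\gamma:\mathbb{Z}\to\mathbb{R}^3$ be a discrete curve whose vertices $\gamma_i$ all lie in a common affine plane $P\subset\mathbb{R}^3$. Let $i\in\mathbb{Z}$, and assume that the discrete curvature $\kappa_i$, the normal vector $N_i$ and the discrete torsion $\tau_i$ of $\gamma$ at $\gamma_i$ (defined in the context) are well defined. Then $\tau_i=0$. Consequently, whenever the discrete torsion of a planar discrete curve is defined, it vanishes at every vertex.
   Context: Quaternions: $\mathbb{H}=\{[r,v]: r\in\mathbb{R},\ v\in\mathbb{R}^3\}$ with $[r,v]+[s,w]=[r+s,v+w]$, $[r,v]\cdot[s,w]=[rs-\langle v,w\rangle,\ rw+sv+v\times w]$, conjugate $\overline{[r,v]}=[r,-v]$, norm $|q|=\sqrt{q\bar q}=\sqrt{r^2+\|v\|^2}$, inverse $q^{-1}=\bar q/|q|^2$. The imaginary part of $q=[r,v]$ is $\operatorname{Im} q=v$, and $\mathbb{R}^3$ is identified with the pure imaginary quaternions $\{[0,v]\}$. Every $q$ has a polar form $q=|q|[\cos\phi,\,u\sin\phi]$ with $\|u\|=1$, $\phi\in[0,\pi]$, and $\sqrt{q}:=\sqrt{|q|}[\cos\frac{\phi}{2},\,u\sin\frac{\phi}{2}]$ (used only for $q\notin\mathbb{R}_{\le 0}$). Cross-ratio: $\operatorname{cr}(a,b,c,d)=(a-b)(b-c)^{-1}(c-d)(d-a)^{-1}$. "Diagonal point": $f(a,b,c,d)=\big((b-a)(c-a)^{-1}\sqrt{\operatorname{cr}(c,a,b,d)}+1\big)^{-1}\big((b-a)(c-a)^{-1}\sqrt{\operatorname{cr}(c,a,b,d)}\,c+b\big)$.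 A discrete curve is a map $\gamma:\mathbb{Z}\to\mathbb{R}^3$, $i\mapsto\gamma_i$. For a vertex $\gamma_i$ define the inserting points $A_i=f(\gamma_{i+2},\gamma_{i-1},\gamma_i,\gamma_{i+1})$, $B_i=f(\gamma_{i-1},\gamma_i,\gamma_{i+1},\gamma_{i+2})$, $C_i=f(\gamma_i,\gamma_{i+1},\gamma_{i+2},\gamma_{i-1})$, $D_i=f(\gamma_{i+1},\gamma_{i+2},\gamma_{i-1},\gamma_i)$; these are pure imaginary, i.e. points of $\mathbb{R}^3$, and are concyclic. The osculating circle $k_i$ of $\gamma$ at $\gamma_i$ is the circle through $A_i,B_i,C_i,D_i$; the discrete curvature $\kappa_i$ is the inverse of its radius; the normal vector $N_i$ is the unit normal vector of $k_i$ at $B_i$ (the unit vector in the plane of $k_i$ along the radius through $B_i$). The discrete torsion at $\gamma_i$ is $\tau_i=-\dfrac{9\,\langle \operatorname{Im}\operatorname{cr}(\gamma_{i-1},\gamma_i,\gamma_{i+1},\gamma_{i+2}),\,N_i\rangle}{2\kappa_i\,\|\gamma_i-\gamma_{i+1}\|^2}.$ "Well defined" means that all inverses and square roots above exist (vertices $\gamma_{i-1},\dots,\gamma_{i+2}$ pairwise distinct, no relevant cross-ratio is a non-positive real), and that $A_i,B_i,C_i,D_i$ determine a circle of positive finite radius. *)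

theory Defs
  imports "HOL-Analysis.Analysis"
begin

type_synonym quat = "real \<times> (real^3)"

definition qadd :: "quat \<Rightarrow> quat \<Rightarrow> quat" where
  "qadd p q = (fst p + fst q, snd p + snd q)"

definition qsub :: "quat \<Rightarrow> quat \<Rightarrow> quat" where
  "qsub p q = (fst p - fst q, snd p - snd q)"

definition qmul :: "quat \<Rightarrow> quat \<Rightarrow> quat" where
  "qmul p q = (fst p * fst q - inner (snd p) (snd q),
               fst p *\<^sub>R snd q + fst q *\<^sub>R snd p + cross3 (snd p) (snd q))"

definition qconj :: "quat \<Rightarrow> quat" where
  "qconj q = (fst q, - snd q)"

definition qnorm :: "quat \<Rightarrow> real" where
  "qnorm q = sqrt ((fst q)\<^sup>2 + (norm (snd q))\<^sup>2)"

definition qinv :: "quat \<Rightarrow> quat" where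
  "qinv q = (fst q / (qnorm q)\<^sup>2, - ((1 / (qnorm q)\<^sup>2) *\<^sub>R snd q))"

definition qone :: quat where "qone = (1, 0)"

definition qpure :: "real^3 \<Rightarrow> quat" where "qpure v = (0, v)"

definition qIm :: "quat \<Rightarrow> real^3" where "qIm q = snd q"

text \<open>Square root via the polar form q = |q| [cos phi, u sin phi], phi in [0,pi], |u| = 1:
  sqrt q = sqrt|q| [cos(phi/2), u sin(phi/2)].  (Only used for q not a non-positive real.
  If Im q = 0 then phi = 0 and the choice of u is irrelevant.)\<close>
definition qsqrt :: "quat \<Rightarrow> quat" where
  "qsqrt q = (let \<phi> = arccos (fst q / qnorm q);
                  u = (1 / norm (snd q)) *\<^sub>R snd q
              in (sqrt (qnorm q) * cos (\<phi> / 2), (sqrt (qnorm q) * sin (\<phi> / 2)) *\<^sub>R u))"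

definition nonpos_real :: "quat \<Rightarrow> bool" where
  "nonpos_real q \<longleftrightarrow> snd q = 0 \<and> fst q \<le> 0"

definition qcr :: "quat \<Rightarrow> quat \<Rightarrow> quat \<Rightarrow> quat \<Rightarrow> quat" where
  "qcr a b c d = qmul (qmul (qmul (qsub a b) (qinv (qsub b c))) (qsub c d)) (qinv (qsub d a))"

definition diagX :: "quat \<Rightarrow> quat \<Rightarrow> quat \<Rightarrow> quat \<Rightarrow> quat" where
  "diagX a b c d = qmul (qmul (qsub b a) (qinv (qsub c a))) (qsqrt (qcr c a b d))"

definition diagf :: "quat \<Rightarrow> quat \<Rightarrow> quat \<Rightarrow> quat \<Rightarrow> quat" where
  "diagf a b c d = qmul (qinv (qadd (diagX a b c d) qone)) (qadd (qmul (diagX a b c d) c) b)"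

definition diagf_defined :: "quat \<Rightarrow> quat \<Rightarrow> quat \<Rightarrow> quat \<Rightarrow> bool" where
  "diagf_defined a b c d \<longleftrightarrow>
     distinct [a, b, c, d] \<and> \<not> nonpos_real (qcr c a b d)
     \<and> qadd (diagX a b c d) qone \<noteq> (0, 0)"

type_synonym dcurve = "int \<Rightarrow> real^3"

definition gq :: "dcurve \<Rightarrow> int \<Rightarrow> quat" where "gq \<gamma> j = qpure (\<gamma> j)"

definition ptA :: "dcurve \<Rightarrow> int \<Rightarrow> real^3" where
  "ptA \<gamma> i = qIm (diagf (gq \<gamma> (i+2)) (gq \<gamma> (i-1)) (gq \<gamma> i) (gq \<gamma> (i+1)))"
definition ptB :: "dcurve \<Rightarrow> int \<Rightarrow> real^3" where
  "ptB \<gamma> i = qIm (diagf (gq \<gamma> (i-1)) (gq \<gamma> i) (gq \<gamma> (i+1)) (gq \<gamma> (i+2)))"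
definition ptC :: "dcurve \<Rightarrow> int \<Rightarrow> real^3" where
  "ptC \<gamma> i = qIm (diagf (gq \<gamma> i) (gq \<gamma> (i+1)) (gq \<gamma> (i+2)) (gq \<gamma> (i-1)))"
definition ptD :: "dcurve \<Rightarrow> int \<Rightarrow> real^3" where
  "ptD \<gamma> i = qIm (diagf (gq \<gamma> (i+1)) (gq \<gamma> (i+2)) (gq \<gamma> (i-1)) (gq \<gamma> i))"

definition inserting_points :: "dcurve \<Rightarrow> int \<Rightarrow> (real^3) set" where
  "inserting_points \<gamma> i = {ptA \<gamma> i, ptB \<gamma> i, ptC \<gamma> i, ptD \<gamma> i}"

definition circle_through :: "(real^3) set \<Rightarrow> real^3 \<Rightarrow> real \<Rightarrow> bool" where
  "circle_through S c \<rho> \<longleftrightarrow> 0 < \<rho> \<and> c \<in> affine hull S \<and> (\<forall>x\<in>S. dist x c = \<rho>)"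

text \<open>Osculating circle k_i: the (unique, when well defined) circle through A_i,B_i,C_i,D_i.\<close>
definition osc_center :: "dcurve \<Rightarrow> int \<Rightarrow> real^3" where
  "osc_center \<gamma> i = fst (THE (c, \<rho>). circle_through (inserting_points \<gamma> i) c \<rho>)"
definition osc_radius :: "dcurve \<Rightarrow> int \<Rightarrow> real" where
  "osc_radius \<gamma> i = snd (THE (c, \<rho>). circle_through (inserting_points \<gamma> i) c \<rho>)"

definition dcurvature :: "dcurve \<Rightarrow> int \<Rightarrow> real" where
  "dcurvature \<gamma> i = 1 / osc_radius \<gamma> i"
definition dnormal :: "dcurve \<Rightarrow> int \<Rightarrow> real^3" where
  "dnormal \<gamma> i = (1 / osc_radius \<gamma> i) *\<^sub>R (osc_center \<gamma> i - ptB \<gamma> i)"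

definition dtorsion :: "dcurve \<Rightarrow> int \<Rightarrow> real" where
  "dtorsion \<gamma> i =
     - (9 * inner (qIm (qcr (gq \<gamma> (i-1)) (gq \<gamma> i) (gq \<gamma> (i+1)) (gq \<gamma> (i+2)))) (dnormal \<gamma> i))
     / (2 * dcurvature \<gamma> i * (norm (\<gamma> i - \<gamma> (i+1)))\<^sup>2)"

definition torsion_well_defined :: "dcurve \<Rightarrow> int \<Rightarrow> bool" where
  "torsion_well_defined \<gamma> i \<longleftrightarrow>
     distinct [\<gamma> (i-1), \<gamma> i, \<gamma> (i+1), \<gamma> (i+2)]
     \<and> diagf_defined (gq \<gamma> (i+2)) (gq \<gamma> (i-1)) (gq \<gamma> i) (gq \<gamma> (i+1))
     \<and> diagf_defined (gq \<gamma> (i-1)) (gq \<gamma> i) (gq \<gamma> (i+1)) (gq \<gamma> (i+2))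
     \<and> diagf_defined (gq \<gamma> i) (gq \<gamma> (i+1)) (gq \<gamma> (i+2)) (gq \<gamma> (i-1))
     \<and> diagf_defined (gq \<gamma> (i+1)) (gq \<gamma> (i+2)) (gq \<gamma> (i-1)) (gq \<gamma> i)
     \<and> card (inserting_points \<gamma> i) \<ge> 3
     \<and> (\<exists>c \<rho>. circle_through (inserting_points \<gamma> i) c \<rho>)"

end

theory Submission
  imports Defs
begin

lemma triple_ip: "inner (cross3 v w) u = inner v (cross3 w u)"
  by (simp add: cross3_simps)
lemma triple_cyc: "inner v (cross3 w u) = inner u (cross3 v w)"
  by (simp add: cross3_simps)
lemma cross_cross_l: "cross3 (cross3 v w) u = (inner v u) *\<^sub>R w - (inner w u) *\<^sub>R v"
  by (simp add: cross3_simps forall_3)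
lemma cross_cross_r: "cross3 v (cross3 w u) = (inner v u) *\<^sub>R w - (inner v w) *\<^sub>R u"
  by (simp add: cross3_simps forall_3)
lemma qmul_assoc: "qmul (qmul p q) r = qmul p (qmul q r)"
proof -
  obtain a v b w c u where e: "p = (a,v)" "q = (b,w)" "r = (c,u)" by (cases p; cases q; cases r) auto
  show ?thesis unfolding e qmul_def
    by (simp add: inner_add_left inner_add_right cross_add_left cross_add_right cross_mult_left cross_mult_right
      triple_ip cross_cross_l cross_cross_r algebra_simps inner_commute triple_cyc)
qed

lemma qmul_add_right: "qmul p (qadd q r) = qadd (qmul p q) (qmul p r)"
  by (cases p; cases q; cases r) (simp add: qmul_def qadd_def cross_add_right inner_add_right algebra_simps)

lemma qmul_add_left: "qmul (qadd q r) p = qadd (qmul q p) (qmul r p)"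
  by (cases p; cases q; cases r) (simp add: qmul_def qadd_def cross_add_left inner_add_left algebra_simps)

lemma qmul_one: "qmul qone p = p"
  by (cases p) (simp add: qmul_def qone_def)

lemma qinv_mul: "q \<noteq> (0,0) \<Longrightarrow> qmul (qinv q) q = qone"
proof (cases q)
  case (Pair a v)
  assume q: "q \<noteq> (0,0)"
  define D where "D = a*a + norm v * norm v"
  have av: "a \<noteq> 0 \<or> v \<noteq> 0" using q Pair by auto
  have s1: "a*a \<ge> 0" "norm v * norm v \<ge> 0" by simp_all
  have pos: "D > 0"
  proof (cases "a = 0")
    case True
    then have "norm v > 0" using av by simp
    then have "norm v * norm v > 0" by simp
    then show ?thesis unfolding D_def using s1 by linarith
  next
    case False
    then have "a * a > 0" using not_real_square_gt_zero[of a] by blast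
    then show ?thesis unfolding D_def using s1 by linarith
  qed
  have qn: "(qnorm q)^2 = D" using Pair by (simp add: qnorm_def D_def power2_eq_square)
  have vv: "inner v v = norm v * norm v" by (simp add: power2_norm_eq_inner[symmetric] power2_eq_square)
  have qi: "qinv q = (a / D, - ((1/D) *\<^sub>R v))" using qn Pair unfolding qinv_def by simp
  have "a / D * a + (1/D) * inner v v = (a*a + inner v v) / D" by (simp add: add_divide_distrib)
  also have "\<dots> = D / D" unfolding vv D_def ..
  also have "\<dots> = 1" using pos by simp
  finally have f: "a / D * a + (1/D) * inner v v = 1" .
  show ?thesis unfolding qi using Pair f by (simp add: qmul_def qone_def cross_mult_left)
qed

definition inC :: "real^3 \<Rightarrow> quat \<Rightarrow> bool" where
  "inC n q \<longleftrightarrow> (\<exists>t. snd q = t *\<^sub>R n)"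
definition inT :: "real^3 \<Rightarrow> quat \<Rightarrow> bool" where
  "inT n q \<longleftrightarrow> fst q = 0 \<and> inner (snd q) n = 0"

lemma perp_cross:
  assumes "n \<noteq> 0" "inner v n = 0" "inner w n = 0"
  shows "\<exists>t. cross3 v w = t *\<^sub>R n"
proof -
  let ?x = "cross3 v w"
  have z: "cross3 n ?x = 0" using assms by (simp add: cross_cross_r inner_commute)
  have "(inner n ?x) *\<^sub>R n - (inner n n) *\<^sub>R ?x = 0" using cross_cross_r[of n n ?x] z by simp
  then have e: "(inner n n) *\<^sub>R ?x = (inner n ?x) *\<^sub>R n" by simp
  have "?x = (1 / inner n n) *\<^sub>R ((inner n n) *\<^sub>R ?x)" using assms(1) by simp
  then have "?x = (inner n ?x / inner n n) *\<^sub>R n" unfolding e by simp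
  then show ?thesis by blast
qed

lemma mul_CC: "inC n p \<Longrightarrow> inC n q \<Longrightarrow> inC n (qmul p q)"
  unfolding inC_def qmul_def
  by (auto simp: cross_mult_left cross_mult_right) (metis scaleR_add_left scaleR_scaleR)

lemma mul_CT: "inC n p \<Longrightarrow> inT n q \<Longrightarrow> inT n (qmul p q)"
  unfolding inC_def inT_def qmul_def
  by (auto simp: cross_mult_left inner_add_left inner_add_right inner_commute triple_cyc dot_cross_self)

lemma mul_TC: "inT n p \<Longrightarrow> inC n q \<Longrightarrow> inT n (qmul p q)"
  unfolding inC_def inT_def qmul_def
  by (auto simp: cross_mult_right inner_add_left inner_add_right inner_commute triple_cyc dot_cross_self)

lemma mul_TT: "n \<noteq> 0 \<Longrightarrow> inT n p \<Longrightarrow> inT n q \<Longrightarrow> inC n (qmul p q)"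
  unfolding inC_def inT_def qmul_def
  using perp_cross by auto

lemma inv_C: "inC n p \<Longrightarrow> inC n (qinv p)"
  unfolding inC_def qinv_def by auto (metis scaleR_minus_left scaleR_scaleR)

lemma inv_T: "inT n p \<Longrightarrow> inT n (qinv p)"
  unfolding inT_def qinv_def by auto

lemma add_C: "inC n p \<Longrightarrow> inC n q \<Longrightarrow> inC n (qadd p q)"
  unfolding inC_def qadd_def by auto (metis scaleR_add_left)

lemma add_T: "inT n p \<Longrightarrow> inT n q \<Longrightarrow> inT n (qadd p q)"
  unfolding inT_def qadd_def by (auto simp: inner_add_left)

lemma one_C: "inC n qone"
  unfolding inC_def qone_def by (auto intro: exI[of _ 0])

lemma sqrt_C: "inC n p \<Longrightarrow> inC n (qsqrt p)"
  unfolding inC_def qsqrt_def Let_def by auto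

lemma sub_T: "inner a n = h \<Longrightarrow> inner b n = h \<Longrightarrow> inT n (qsub (qpure a) (qpure b))"
  unfolding inT_def qsub_def qpure_def by (auto simp: inner_diff_left)

lemma cr_C:
  assumes "n \<noteq> 0" "inner a n = h" "inner b n = h" "inner c n = h" "inner d n = h"
  shows "inC n (qcr (qpure a) (qpure b) (qpure c) (qpure d))"
  unfolding qcr_def using assms
  by (intro mul_TT mul_CT mul_TT inv_T sub_T) auto

lemma X_C:
  assumes "n \<noteq> 0" "inner a n = h" "inner b n = h" "inner c n = h" "inner d n = h"
  shows "inC n (diagX (qpure a) (qpure b) (qpure c) (qpure d))"
  unfolding diagX_def using assms
  by (intro mul_CC sqrt_C cr_C mul_TT inv_T sub_T) auto

lemma diagf_plane:
  assumes n: "n \<noteq> 0" and h: "inner a n = h" "inner b n = h" "inner c n = h" "inner d n = h"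
    and Y: "qadd (diagX (qpure a) (qpure b) (qpure c) (qpure d)) qone \<noteq> (0,0)"
  shows "inner (qIm (diagf (qpure a) (qpure b) (qpure c) (qpure d))) n = h"
proof -
  define X where "X = diagX (qpure a) (qpure b) (qpure c) (qpure d)"
  define Y where "Y = qadd X qone"
  define k where "k = h / inner n n"
  define m where "m = ((0::real), k *\<^sub>R n)"
  have XC: "inC n X" unfolding X_def using X_C[OF assms(1-5)] .
  have YC: "inC n Y" unfolding Y_def by (intro add_C XC one_C)
  have Y0: "Y \<noteq> (0,0)" using Y unfolding Y_def X_def .
  have nn: "inner n n \<noteq> 0" using n by simp
  have cT: "inT n (0, c - k *\<^sub>R n)" unfolding inT_def k_def using h nn
    by (simp add: inner_diff_left inner_diff_right inner_commute)
  have bT: "inT n (0, b - k *\<^sub>R n)" unfolding inT_def k_def using h nn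
    by (simp add: inner_diff_left inner_diff_right inner_commute)
  have ce: "qpure c = qadd m (0, c - k *\<^sub>R n)" by (simp add: qpure_def qadd_def m_def)
  have be: "qpure b = qadd m (0, b - k *\<^sub>R n)" by (simp add: qpure_def qadd_def m_def)
  define Z where "Z = qadd (qmul X (0, c - k *\<^sub>R n)) (0, b - k *\<^sub>R n)"
  have ZT: "inT n Z" unfolding Z_def by (intro add_T mul_CT XC cT bT)
  have "qadd (qmul X (qpure c)) (qpure b) = qadd (qmul Y m) Z"
    unfolding ce be Z_def Y_def qmul_add_right qmul_add_left qmul_one
    by (simp add: qadd_def)
  then have "diagf (qpure a) (qpure b) (qpure c) (qpure d) = qadd (qmul (qmul (qinv Y) Y) m) (qmul (qinv Y) Z)"
    unfolding diagf_def X_def[symmetric] Y_def[symmetric]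
    by (simp add: qmul_add_right qmul_assoc)
  also have "\<dots> = qadd m (qmul (qinv Y) Z)" using qinv_mul[OF Y0] qmul_one by simp
  finally have e: "diagf (qpure a) (qpure b) (qpure c) (qpure d) = qadd m (qmul (qinv Y) Z)" .
  have "inT n (qmul (qinv Y) Z)" by (intro mul_CT inv_C YC ZT)
  then show ?thesis unfolding e qIm_def qadd_def m_def k_def inT_def using nn
    by (simp add: inner_add_left)
qed

lemma circle_unique:
  assumes 1: "circle_through S c1 r1" and 2: "circle_through S c2 r2"
  shows "c1 = c2 \<and> r1 = r2"
proof -
  have "S \<noteq> {}" using 1 unfolding circle_through_def by auto
  then obtain a where a: "a \<in> S" by auto
  have c1: "c1 \<in> (\<lambda>x. a+x) ` span ((\<lambda>x. -a+x) ` (S-{a}))"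
    using 1 affine_hull_span2[OF a] unfolding circle_through_def by auto
  have c2: "c2 \<in> (\<lambda>x. a+x) ` span ((\<lambda>x. -a+x) ` (S-{a}))"
    using 2 affine_hull_span2[OF a] unfolding circle_through_def by auto
  obtain v1 v2 where v: "v1 \<in> span ((\<lambda>x. -a+x) ` (S-{a}))" "v2 \<in> span ((\<lambda>x. -a+x) ` (S-{a}))"
    "c1 = a + v1" "c2 = a + v2" using c1 c2 by auto
  have dsp: "v1 - v2 \<in> span ((\<lambda>x. -a+x) ` (S-{a}))" using v by (simp add: span_diff)
  have orth: "orthogonal (v1 - v2) y" if yy: "y \<in> (\<lambda>x. -a+x) ` (S-{a})" for y
  proof -
    obtain x where x: "x \<in> S" "y = -a + x" using yy by blast
    have e: "inner (x - c) (x - c) = r^2" "inner (a - c) (a - c) = r^2"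
      if "circle_through S c r" for c r
      using that x a unfolding circle_through_def dist_norm
      by (auto simp: power2_norm_eq_inner[symmetric])
    have i0: "inner (x - a) (c1 - c2) = 0"
      using e[OF 1] e[OF 2] by (simp add: inner_diff_left inner_diff_right inner_commute algebra_simps)
    have "c1 - c2 = v1 - v2" using v by simp
    moreover have "y = x - a" using x by simp
    ultimately show ?thesis using i0 unfolding orthogonal_def by (simp add: inner_commute)
  qed
  have "orthogonal (v1 - v2) (v1 - v2)" by (rule orthogonal_to_span[OF dsp orth])
  then have "c1 = c2" using v unfolding orthogonal_def by simp
  moreover have "r1 = r2" using 1 2 a \<open>c1 = c2\<close> unfolding circle_through_def by auto
  ultimately show ?thesis by simp
qed

theorem mainTheorem1:
  fixes \<gamma> :: "int \<Rightarrow> real^3" and P :: "(real^3) set" and i :: int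
  assumes "affine P" and "aff_dim P = 2"
    and "\<forall>j. \<gamma> j \<in> P"
    and "torsion_well_defined \<gamma> i"
  shows "dtorsion \<gamma> i = 0"
proof -
  obtain n h where nh: "n \<noteq> 0" "affine hull P = {x. n \<bullet> x = h}"
    using assms(2) aff_dim_eq_hyperplane[of P] by auto
  have "affine hull P = P" using assms(1) by (simp add: affine_hull_eq)
  then have Pe: "P = {x. inner x n = h}" using nh(2) by (auto simp: inner_commute)
  have g: "inner (\<gamma> j) n = h" for j using assms(3) Pe by auto
  define S where "S = inserting_points \<gamma> i"
  have wd: "diagf_defined (gq \<gamma> (i+2)) (gq \<gamma> (i-1)) (gq \<gamma> i) (gq \<gamma> (i+1))"
     "diagf_defined (gq \<gamma> (i-1)) (gq \<gamma> i) (gq \<gamma> (i+1)) (gq \<gamma> (i+2))"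
     "diagf_defined (gq \<gamma> i) (gq \<gamma> (i+1)) (gq \<gamma> (i+2)) (gq \<gamma> (i-1))"
     "diagf_defined (gq \<gamma> (i+1)) (gq \<gamma> (i+2)) (gq \<gamma> (i-1)) (gq \<gamma> i)"
    and ex: "\<exists>c \<rho>. circle_through S c \<rho>"
    using assms(4) unfolding torsion_well_defined_def S_def by auto
  have pts: "inner (ptA \<gamma> i) n = h" "inner (ptB \<gamma> i) n = h" "inner (ptC \<gamma> i) n = h" "inner (ptD \<gamma> i) n = h"
    unfolding ptA_def ptB_def ptC_def ptD_def gq_def
    using wd unfolding diagf_defined_def gq_def
    by (auto intro!: diagf_plane[OF nh(1)] g)
  have SP: "S \<subseteq> P" unfolding S_def inserting_points_def Pe using pts by auto
  obtain c0 r0 where c0: "circle_through S c0 r0" using ex by auto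
  have th: "(THE (c, \<rho>). circle_through S c \<rho>) = (c0, r0)"
    by (rule the_equality) (use c0 circle_unique in auto)
  have oc: "osc_center \<gamma> i = c0" "osc_radius \<gamma> i = r0"
    unfolding osc_center_def osc_radius_def S_def[symmetric] th by auto
  have "c0 \<in> affine hull S" using c0 unfolding circle_through_def by auto
  then have "c0 \<in> P" using hull_minimal[of S P affine, OF SP assms(1)] by auto
  then have c0h: "inner c0 n = h" using Pe by auto
  have Nperp: "inner (dnormal \<gamma> i) n = 0"
    unfolding dnormal_def oc using c0h pts(2) by (simp add: inner_diff_left)
  have "inC n (qcr (gq \<gamma> (i-1)) (gq \<gamma> i) (gq \<gamma> (i+1)) (gq \<gamma> (i+2)))"
    unfolding gq_def by (rule cr_C[OF nh(1) g g g g])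
  then obtain t where t: "qIm (qcr (gq \<gamma> (i-1)) (gq \<gamma> i) (gq \<gamma> (i+1)) (gq \<gamma> (i+2))) = t *\<^sub>R n"
    unfolding inC_def qIm_def by auto
  have "inner (qIm (qcr (gq \<gamma> (i-1)) (gq \<gamma> i) (gq \<gamma> (i+1)) (gq \<gamma> (i+2)))) (dnormal \<gamma> i) = 0"
    unfolding t using Nperp by (simp add: inner_commute)
  then show ?thesis unfolding dtorsion_def by simp
qed

end
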